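(* Let $(A,\mathfrak{g},\omega)$ be an $n$-plectic structure, $f\in\mathcal{P}ois(A,\mathfrak{g},\omega)$ a homogeneous Poisson cotensor with associated Poisson constraint $y$ (i.e. $i_y\omega=f$) and associated Hamilton tensor $x$ (i.e. $i_x\omega=df$). If both $x$ and $y$ are homogeneous, then $|x|=|f|+n$ and $|y|=|x|+1$ with respect to the tensor grading. Moreover $d\,i_y\omega=i_x\omega$.
   Context: A Lie Rinehart pair $(A,\mathfrak{g})$: $A$ a commutative associative unital $\mathbb{R}$-algebra, $\mathfrak{g}$ a real Lie algebra that is an $A$-module, with a Lie algebra morphism $D:\mathfrak{g}\to\mathrm{Der}(A)$ such that $[x,ay]=D_x(a)y+a[x,y]$; torsionless means $\mathfrak{g}\to\mathfrak{g}^{\vee\vee}$ ($\mathfrak{g}^\vee=\mathrm{Hom}_A(\mathfrak{g},A)$) is injective. Tensors $X(\mathfrak{g},A)=\bigoplus_k\Lambda^k_A\mathfrak{g}$, cotensors $\Omega(\mathfrak{g},A)=\bigoplus_k\Lambda^k_A\mathfrak{g}^\vee$. Tensor grading: $|x|=k$ for $x\in\Lambda^k_A\mathfrak{g}$ and $|f|=-k$ for $f\in\Lambda^k_A\mathfrak{g}^\vee$ (tensors in positive, cotensors in negative degrees). The right contraction $i_x$ is defined by $\langle i_xf,z\rangle=\langle f,x\wedge z\rangle$ for all tensors $z$, where $\langle\cdot,\cdot\rangle$ is the natural determinant pairing between $\Lambda^k_A\mathfrak{g}^\vee$ and $\Lambda^k_A\mathfrak{g}$; $d$ is the de Rham (Chevalley–Eilenberg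 type) differential on $\Omega(\mathfrak{g},A)$, $df(x_0\wedge\cdots\wedge x_k)=\sum_j(-1)^jD_{x_j}(f(\cdots\widehat{x_j}\cdots))+\sum_{i<j}(-1)^{i+j}f([x_i,x_j]\wedge\cdots\widehat{x_i}\cdots\widehat{x_j}\cdots)$. An $n$-plectic structure is a torsionless Lie Rinehart pair with a cocycle $\omega\in\Lambda^{n+1}_A\mathfrak{g}^\vee$. A Poisson cotensor is a cotensor $f$ for which there exist tensors $x$ with $i_x\omega=df$ (Hamilton tensor) and $y$ with $i_y\omega=f$ (Poisson constraint); $\mathcal{P}ois(A,\mathfrak{g},\omega)$ is the set of Poisson cotensors. *)

theory Defs
  imports Complex_Main "HOL-Combinatorics.Permutations"
begin

text \<open>
The algebra A is a type 'a of class comm_ring_1 and real_algebra_1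
(a commutative associative unital real algebra).  The Lie algebra g is a type 'g of
class ab_group_add carrying an A-module action sm, a bracket br and an anchor D.
Real scalars act on g through sm (of_real r).
\<close>

definition is_A_module :: "('a::comm_ring_1 \<Rightarrow> 'g::ab_group_add \<Rightarrow> 'g) \<Rightarrow> bool" where
  "is_A_module sm \<longleftrightarrow>
     (\<forall>a x y. sm a (x + y) = sm a x + sm a y) \<and>
     (\<forall>a b x. sm (a + b) x = sm a x + sm b x) \<and>
     (\<forall>a b x. sm (a * b) x = sm a (sm b x)) \<and>
     (\<forall>x. sm 1 x = x)"

definition is_real_lie_algebra ::
  "('a::{comm_ring_1,real_algebra_1} \<Rightarrow> 'g::ab_group_add \<Rightarrow> 'g) \<Rightarrow> ('g \<Rightarrow> 'g \<Rightarrow> 'g) \<Rightarrow> bool" where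
  "is_real_lie_algebra sm br \<longleftrightarrow>
     (\<forall>x y z. br (x + y) z = br x z + br y z) \<and>
     (\<forall>x y z. br x (y + z) = br x y + br x z) \<and>
     (\<forall>(r::real) x y. br (sm (of_real r) x) y = sm (of_real r) (br x y)) \<and>
     (\<forall>(r::real) x y. br x (sm (of_real r) y) = sm (of_real r) (br x y)) \<and>
     (\<forall>x. br x x = 0) \<and>
     (\<forall>x y z. br x (br y z) + br y (br z x) + br z (br x y) = 0)"

definition is_derivation :: "('a::{comm_ring_1,real_algebra_1} \<Rightarrow> 'a) \<Rightarrow> bool" where
  "is_derivation \<delta> \<longleftrightarrow>
     (\<forall>a b. \<delta> (a + b) = \<delta> a + \<delta> b) \<and>
     (\<forall>(r::real) a. \<delta> (of_real r * a) = of_real r * \<delta> a) \<and>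
     (\<forall>a b. \<delta> (a * b) = a * \<delta> b + \<delta> a * b)"

definition is_lie_rinehart ::
  "('a::{comm_ring_1,real_algebra_1} \<Rightarrow> 'g::ab_group_add \<Rightarrow> 'g) \<Rightarrow> ('g \<Rightarrow> 'g \<Rightarrow> 'g)
     \<Rightarrow> ('g \<Rightarrow> 'a \<Rightarrow> 'a) \<Rightarrow> bool" where
  "is_lie_rinehart sm br D \<longleftrightarrow>
     is_A_module sm \<and> is_real_lie_algebra sm br \<and>
     (\<forall>x. is_derivation (D x)) \<and>
     \<comment> \<open>D is a morphism of real Lie algebras g \<rightarrow> Der(A)\<close>
     (\<forall>x y a. D (x + y) a = D x a + D y a) \<and>
     (\<forall>(r::real) x a. D (sm (of_real r) x) a = of_real r * D x a) \<and>
     (\<forall>x y a. D (br x y) a = D x (D y a) - D y (D x a)) \<and>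
     \<comment> \<open>Leibniz rule\<close>
     (\<forall>x a y. br x (sm a y) = sm (D x a) y + sm a (br x y))"

definition dual :: "('a::comm_ring_1 \<Rightarrow> 'g::ab_group_add \<Rightarrow> 'g) \<Rightarrow> ('g \<Rightarrow> 'a) set" where
  "dual sm = {\<phi>. (\<forall>x y. \<phi> (x + y) = \<phi> x + \<phi> y) \<and> (\<forall>a x. \<phi> (sm a x) = a * \<phi> x)}"

text \<open>Torsionless: the canonical map g \<rightarrow> g^\<or>\<or> is injective.\<close>
definition torsionless :: "('a::comm_ring_1 \<Rightarrow> 'g::ab_group_add \<Rightarrow> 'g) \<Rightarrow> bool" where
  "torsionless sm \<longleftrightarrow> (\<forall>x. (\<forall>\<phi>\<in>dual sm. \<phi> x = 0) \<longrightarrow> x = 0)"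

text \<open>A tensor is represented by a formal A-linear combination of words x1\<dots>xk
(a finitely supported function on 'g list); the word [x1,\<dots>,xk] stands for
x1 \<and> \<dots> \<and> xk.  Two representatives define the same tensor iff their difference
lies in the A-span of the multilinearity and alternation relations.\<close>

definition formal :: "('g list \<Rightarrow> 'a::zero) \<Rightarrow> bool" where
  "formal c \<longleftrightarrow> finite {l. c l \<noteq> 0}"

definition word :: "'g list \<Rightarrow> 'g list \<Rightarrow> 'a::{zero,one}" where
  "word w = (\<lambda>l. if l = w then 1 else 0)"

inductive_set ext_rel :: "('a::comm_ring_1 \<Rightarrow> 'g::ab_group_add \<Rightarrow> 'g) \<Rightarrow> ('g list \<Rightarrow> 'a) set"
  for sm where
  rel_zero: "(\<lambda>_. 0) \<in> ext_rel sm"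
| rel_add1: "(\<lambda>l. word (u @ [x + y] @ v) l - word (u @ [x] @ v) l - word (u @ [y] @ v) l) \<in> ext_rel sm"
| rel_smult1: "(\<lambda>l. word (u @ [sm a x] @ v) l - a * word (u @ [x] @ v) l) \<in> ext_rel sm"
| rel_alt: "word (u @ [x, x] @ v) \<in> ext_rel sm"
| rel_plus: "c \<in> ext_rel sm \<Longrightarrow> c' \<in> ext_rel sm \<Longrightarrow> (\<lambda>l. c l + c' l) \<in> ext_rel sm"
| rel_scale: "c \<in> ext_rel sm \<Longrightarrow> (\<lambda>l. a * c l) \<in> ext_rel sm"

definition tensor_homogeneous ::
  "('a::comm_ring_1 \<Rightarrow> 'g::ab_group_add \<Rightarrow> 'g) \<Rightarrow> int \<Rightarrow> ('g list \<Rightarrow> 'a) \<Rightarrow> bool" where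
  "tensor_homogeneous sm p c \<longleftrightarrow>
     (\<exists>c'. formal c' \<and> (\<lambda>l. c l - c' l) \<in> ext_rel sm \<and> (\<forall>l. c' l \<noteq> 0 \<longrightarrow> int (length l) = p))"

text \<open>A cotensor is identified, via the determinant pairing, with the A-valued
function on words it induces: \<phi>1 \<and> \<dots> \<and> \<phi>k pairs with x1 \<and> \<dots> \<and> xk to det(\<phi>i(xj)),
and pairs to 0 with words of other length.\<close>

definition det_pair :: "('g \<Rightarrow> 'a::comm_ring_1) list \<Rightarrow> 'g list \<Rightarrow> 'a" where
  "det_pair \<phi>s l =
     (if length l = length \<phi>s then
        (\<Sum>\<pi> | \<pi> permutes {..<length \<phi>s}. of_int (sign \<pi>) * (\<Prod>i<length \<phi>s. (\<phi>s ! i) (l ! \<pi> i)))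
      else 0)"

inductive_set cotensors :: "('a::comm_ring_1 \<Rightarrow> 'g::ab_group_add \<Rightarrow> 'g) \<Rightarrow> ('g list \<Rightarrow> 'a) set"
  for sm where
  cot_zero: "(\<lambda>_. 0) \<in> cotensors sm"
| cot_wedge: "set \<phi>s \<subseteq> dual sm \<Longrightarrow> (\<lambda>l. a * det_pair \<phi>s l) \<in> cotensors sm"
| cot_plus: "f \<in> cotensors sm \<Longrightarrow> f' \<in> cotensors sm \<Longrightarrow> (\<lambda>l. f l + f' l) \<in> cotensors sm"

text \<open>A cotensor is homogeneous of tensor degree q (q = -k for an element of \<Lambda>^k g^\<or>).\<close>
definition cotensor_homogeneous :: "int \<Rightarrow> ('g list \<Rightarrow> 'a::zero) \<Rightarrow> bool" where
  "cotensor_homogeneous q f \<longleftrightarrow> (\<forall>l. f l \<noteq> 0 \<longrightarrow> int (length l) = - q)"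

text \<open>Right contraction: (i_x f)(z) = f(x \<and> z).\<close>
definition contr :: "('g list \<Rightarrow> 'a::comm_ring_1) \<Rightarrow> ('g list \<Rightarrow> 'a) \<Rightarrow> ('g list \<Rightarrow> 'a)" where
  "contr x f = (\<lambda>l. \<Sum>m\<in>{m. x m \<noteq> 0}. x m * f (m @ l))"

definition del_nth :: "nat \<Rightarrow> 'g list \<Rightarrow> 'g list" where
  "del_nth j l = take j l @ drop (Suc j) l"

definition dR :: "('g \<Rightarrow> 'g \<Rightarrow> 'g) \<Rightarrow> ('g \<Rightarrow> 'a::comm_ring_1 \<Rightarrow> 'a) \<Rightarrow> ('g list \<Rightarrow> 'a) \<Rightarrow> ('g list \<Rightarrow> 'a)" where
  "dR br D f = (\<lambda>l.
     (\<Sum>j<length l. (-1) ^ j * D (l ! j) (f (del_nth j l))) +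
     (\<Sum>j<length l. \<Sum>i<j. (-1) ^ (i + j) * f (br (l ! i) (l ! j) # del_nth i (del_nth j l))))"

definition n_plectic ::
  "nat \<Rightarrow> ('a::{comm_ring_1,real_algebra_1} \<Rightarrow> 'g::ab_group_add \<Rightarrow> 'g) \<Rightarrow> ('g \<Rightarrow> 'g \<Rightarrow> 'g)
     \<Rightarrow> ('g \<Rightarrow> 'a \<Rightarrow> 'a) \<Rightarrow> ('g list \<Rightarrow> 'a) \<Rightarrow> bool" where
  "n_plectic n sm br D \<omega> \<longleftrightarrow>
     is_lie_rinehart sm br D \<and> torsionless sm \<and>
     \<omega> \<in> cotensors sm \<and> cotensor_homogeneous (- int (n + 1)) \<omega> \<and> dR br D \<omega> = (\<lambda>_. 0)"

definition is_tensor :: "('g list \<Rightarrow> 'a::zero) \<Rightarrow> bool" where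
  "is_tensor x \<longleftrightarrow> formal x"

definition hamilton_tensor where
  "hamilton_tensor br D \<omega> f x \<longleftrightarrow> is_tensor x \<and> contr x \<omega> = dR br D f"

definition poisson_constraint where
  "poisson_constraint \<omega> f y \<longleftrightarrow> is_tensor y \<and> contr y \<omega> = f"

definition Pois where
  "Pois sm br D \<omega> = {f \<in> cotensors sm. (\<exists>x. hamilton_tensor br D \<omega> f x) \<and> (\<exists>y. poisson_constraint \<omega> f y)}"

end

theory Submission
  imports Defs
begin

lemma perm_sum_alt:
  fixes F :: "(nat \<Rightarrow> nat) \<Rightarrow> 'a::comm_ring_1"
  assumes jk: "j \<noteq> k" and jU: "j \<in> U" and kU: "k \<in> U" and fin: "finite U"
    and inv: "\<And>p. p permutes U \<Longrightarrow> F (Transposition.transpose j k \<circ> p) = F p"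
  shows "(\<Sum>p | p permutes U. of_int (sign p) * F p) = 0"
proof -
  let ?t = "Transposition.transpose j k"
  let ?PU = "{p. p permutes U}"
  let ?S1 = "{p. p \<in> ?PU \<and> evenperm p}"
  let ?S2 = "{p. p \<in> ?PU \<and> \<not> evenperm p}"
  let ?f = "\<lambda>p. of_int (sign p) * F p"
  let ?g = "\<lambda>p. ?t \<circ> p"
  have tp: "?t permutes U"
    using jU kU by (simp add: permutes_swap_id)
  have perm_t: "permutation ?t"
    by (simp add: permutation_swap_id)
  have inj_g: "inj_on ?g ?S1"
    unfolding inj_on_def by (metis comp_assoc id_comp swap_id_idempotent)
  have img: "?g ` ?S1 = ?S2"
  proof
    show "?g ` ?S1 \<subseteq> ?S2"
    proof
      fix q assume "q \<in> ?g ` ?S1"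
      then obtain p where p: "p permutes U" "evenperm p" "q = ?t \<circ> p" by auto
      have "permutation p" using p(1) fin permutation_permutes by blast
      then have "\<not> evenperm q" using p jk
        by (simp add: evenperm_comp evenperm_swap permutation_swap_id)
      moreover have "q permutes U" using p tp permutes_compose by blast
      ultimately show "q \<in> ?S2" by simp
    qed
  next
    show "?S2 \<subseteq> ?g ` ?S1"
    proof
      fix q assume q: "q \<in> ?S2"
      let ?p = "?t \<circ> q"
      have qp: "q permutes U" using q by simp
      have "permutation q" using qp fin permutation_permutes by blast
      then have "evenperm ?p" using q jk
        by (simp add: evenperm_comp evenperm_swap permutation_swap_id)
      moreover have "?p permutes U" using qp tp permutes_compose by blast
      moreover have "q = ?t \<circ> ?p"
        by (metis comp_assoc id_comp swap_id_idempotent)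
      ultimately show "q \<in> ?g ` ?S1" by blast
    qed
  qed
  have "sum ?f ?S2 = sum ?f (?g ` ?S1)" by (simp only: img)
  also have "\<dots> = sum (?f \<circ> ?g) ?S1" by (rule sum.reindex[OF inj_g])
  also have "\<dots> = sum (\<lambda>p. - ?f p) ?S1"
  proof (rule sum.cong, simp)
    fix p assume p: "p \<in> ?S1"
    have pp: "permutation p" using p fin permutation_permutes by blast
    have "sign (?t \<circ> p) = - sign p"
      by (simp add: sign_compose[OF perm_t pp] sign_swap_id jk)
    then show "(?f \<circ> ?g) p = - ?f p" using inv p by simp
  qed
  also have "\<dots> = - sum ?f ?S1" by (simp add: sum_negf)
  finally have *: "sum ?f ?S2 = - sum ?f ?S1" .
  have fPU: "finite ?PU" using fin finite_permutations by blast
  have PU: "?PU = ?S1 \<union> ?S2" by blast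
  have "sum ?f ?PU = sum ?f (?S1 \<union> ?S2)" by (simp only: PU[symmetric])
  also have "sum ?f (?S1 \<union> ?S2) = sum ?f ?S1 + sum ?f ?S2"
    by (rule sum.union_disjoint) (use fPU in auto)
  finally have "sum ?f ?PU = sum ?f ?S1 + sum ?f ?S2" .
  then show ?thesis using * by simp
qed

lemma nth_mid: "m \<noteq> length u \<Longrightarrow> (u@[z]@v)!m = (u@[w]@v)!m"
  by (cases "m < length u") (auto simp: nth_append nth_Cons')

lemma prod_mid:
  fixes g :: "nat \<Rightarrow> 'g \<Rightarrow> 'a::comm_ring_1"
  assumes p: "p permutes {..<k}" and uk: "length u < k"
  shows "\<exists>R. \<forall>z. (\<Prod>i<k. g i ((u@[z]@v) ! p i)) = g (inv p (length u)) z * R"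
proof -
  let ?i0 = "inv p (length u)"
  have i0k: "?i0 < k" using permutes_in_image[OF permutes_inv[OF p], of "length u"] uk by simp
  have pi0: "p ?i0 = length u" using permutes_inverses(1)[OF p] by simp
  let ?R = "\<Prod>i\<in>{..<k} - {?i0}. g i ((u@[undefined]@v) ! p i)"
  have "\<forall>z. (\<Prod>i<k. g i ((u@[z]@v) ! p i)) = g ?i0 z * ?R"
  proof
    fix z
    have "(\<Prod>i<k. g i ((u@[z]@v) ! p i)) = g ?i0 ((u@[z]@v) ! p ?i0) * (\<Prod>i\<in>{..<k} - {?i0}. g i ((u@[z]@v) ! p i))"
      using i0k by (simp add: prod.remove)
    also have "(\<Prod>i\<in>{..<k} - {?i0}. g i ((u@[z]@v) ! p i)) = ?R"
    proof (rule prod.cong, simp)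
      fix i assume i: "i \<in> {..<k} - {?i0}"
      have "p i \<noteq> length u"
      proof
        assume "p i = length u"
        then have "i = ?i0" using permutes_inverses(2)[OF p] by metis
        then show False using i by simp
      qed
      then show "g i ((u@[z]@v) ! p i) = g i ((u@[undefined]@v) ! p i)"
        using nth_mid by metis
    qed
    finally show "(\<Prod>i<k. g i ((u@[z]@v) ! p i)) = g ?i0 z * ?R" using pi0 by simp
  qed
  then show ?thesis by blast
qed

lemma det_add:
  assumes "set \<phi>s \<subseteq> dual sm"
  shows "det_pair \<phi>s (u@[x+y]@v) = det_pair \<phi>s (u@[x]@v) + det_pair \<phi>s (u@[y]@v)"
proof (cases "length (u@[x]@v) = length \<phi>s")
  case False then show ?thesis by (simp add: det_pair_def)
next
  case True
  then have uk: "length u < length \<phi>s" by simp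
  have "det_pair \<phi>s (u@[x+y]@v) = (\<Sum>p | p permutes {..<length \<phi>s}.
      of_int (sign p) * (\<Prod>i<length \<phi>s. (\<phi>s ! i) ((u@[x]@v) ! p i)) +
      of_int (sign p) * (\<Prod>i<length \<phi>s. (\<phi>s ! i) ((u@[y]@v) ! p i)))"
    unfolding det_pair_def using True
  proof (simp, intro sum.cong refl)
    fix p assume "p \<in> {p. p permutes {..<length \<phi>s}}"
    then have p: "p permutes {..<length \<phi>s}" by simp
    obtain R where R: "\<And>z. (\<Prod>i<length \<phi>s. (\<phi>s ! i) ((u@[z]@v) ! p i)) = (\<phi>s ! inv p (length u)) z * R"
      using prod_mid[OF p uk, of "(!) \<phi>s" v] by blast
    have "inv p (length u) < length \<phi>s" using permutes_in_image[OF permutes_inv[OF p], of "length u"] uk by simp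
    then have "\<phi>s ! inv p (length u) \<in> dual sm" using assms nth_mem by blast
    then have add: "(\<phi>s ! inv p (length u)) (x + y) = (\<phi>s ! inv p (length u)) x + (\<phi>s ! inv p (length u)) y"
      by (simp add: dual_def)
    show "of_int (sign p) * (\<Prod>i<length \<phi>s. (\<phi>s ! i) ((u @ (x + y) # v) ! p i)) =
         of_int (sign p) * (\<Prod>i<length \<phi>s. (\<phi>s ! i) ((u @ x # v) ! p i)) +
         of_int (sign p) * (\<Prod>i<length \<phi>s. (\<phi>s ! i) ((u @ y # v) ! p i))"
      using R[of "x+y"] R[of x] R[of y] add by (simp add: algebra_simps)
  qed
  also have "\<dots> = det_pair \<phi>s (u@[x]@v) + det_pair \<phi>s (u@[y]@v)"
    unfolding det_pair_def using True by (simp add: sum.distrib)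
  finally show ?thesis .
qed

lemma det_smul:
  assumes "set \<phi>s \<subseteq> dual sm"
  shows "det_pair \<phi>s (u@[sm a x]@v) = a * det_pair \<phi>s (u@[x]@v)"
proof (cases "length (u@[x]@v) = length \<phi>s")
  case False then show ?thesis by (simp add: det_pair_def)
next
  case True
  then have uk: "length u < length \<phi>s" by simp
  have "det_pair \<phi>s (u@[sm a x]@v) = (\<Sum>p | p permutes {..<length \<phi>s}.
      a * (of_int (sign p) * (\<Prod>i<length \<phi>s. (\<phi>s ! i) ((u@[x]@v) ! p i))))"
    unfolding det_pair_def using True
  proof (simp, intro sum.cong refl)
    fix p assume "p \<in> {p. p permutes {..<length \<phi>s}}"
    then have p: "p permutes {..<length \<phi>s}" by simp
    obtain R where R: "\<And>z. (\<Prod>i<length \<phi>s. (\<phi>s ! i) ((u@[z]@v) ! p i)) = (\<phi>s ! inv p (length u)) z * R"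
      using prod_mid[OF p uk, of "(!) \<phi>s" v] by blast
    have "inv p (length u) < length \<phi>s" using permutes_in_image[OF permutes_inv[OF p], of "length u"] uk by simp
    then have "\<phi>s ! inv p (length u) \<in> dual sm" using assms nth_mem by blast
    then have sc: "(\<phi>s ! inv p (length u)) (sm a x) = a * (\<phi>s ! inv p (length u)) x"
      by (simp add: dual_def)
    show "of_int (sign p) * (\<Prod>i<length \<phi>s. (\<phi>s ! i) ((u @ sm a x # v) ! p i)) =
         a * (of_int (sign p) * (\<Prod>i<length \<phi>s. (\<phi>s ! i) ((u @ x # v) ! p i)))"
      using R[of "sm a x"] R[of x] sc by (simp add: algebra_simps)
  qed
  also have "\<dots> = a * det_pair \<phi>s (u@[x]@v)"
    unfolding det_pair_def using True by (simp add: sum_distrib_left)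
  finally show ?thesis .
qed

lemma det_alt: "det_pair \<phi>s (u@[x,x]@v) = 0"
proof (cases "length (u@[x,x]@v) = length \<phi>s")
  case False then show ?thesis by (simp add: det_pair_def)
next
  case True
  let ?l = "u@[x,x]@v"
  have nt: "?l ! (Transposition.transpose (length u) (Suc (length u)) m) = ?l ! m" for m
    by (auto simp: Transposition.transpose_def nth_append)
  have "(\<Sum>p | p permutes {..<length \<phi>s}. of_int (sign p) * (\<Prod>i<length \<phi>s. (\<phi>s ! i) (?l ! p i))) = 0"
    by (rule perm_sum_alt[where j="length u" and k="Suc (length u)"]) (use True nt in auto)
  then show ?thesis unfolding det_pair_def using True by simp
qed

definition alt_ml :: "('a::comm_ring_1 \<Rightarrow> 'g::ab_group_add \<Rightarrow> 'g) \<Rightarrow> ('g list \<Rightarrow> 'a) \<Rightarrow> bool" where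
  "alt_ml sm \<omega> \<longleftrightarrow> (\<forall>u x y v. \<omega> (u@[x+y]@v) = \<omega> (u@[x]@v) + \<omega> (u@[y]@v)) \<and>
     (\<forall>u a x v. \<omega> (u@[sm a x]@v) = a * \<omega> (u@[x]@v)) \<and> (\<forall>u x v. \<omega> (u@[x,x]@v) = 0)"

lemma cotensors_alt_ml: "\<omega> \<in> cotensors sm \<Longrightarrow> alt_ml sm \<omega>"
proof (induction rule: cotensors.induct)
  case cot_zero then show ?case by (simp add: alt_ml_def)
next
  case (cot_wedge \<phi>s a)
  show ?case
    apply (simp only: alt_ml_def det_add[OF cot_wedge] det_smul[OF cot_wedge] det_alt)
    by (simp add: algebra_simps)
next
  case (cot_plus f f')
  then show ?case by (simp add: alt_ml_def algebra_simps)
qed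


lemma sum_word:
  fixes g :: "'g list \<Rightarrow> 'a::comm_ring_1"
  assumes "finite S" "w \<in> S"
  shows "(\<Sum>m\<in>S. word w m * g m) = g w"
proof -
  have "(\<Sum>m\<in>S. word w m * g m) = (\<Sum>m\<in>S. if w = m then g w else 0)"
    by (rule sum.cong) (auto simp: word_def)
  also have "\<dots> = g w" using assms by simp
  finally show ?thesis .
qed

lemma sum_extend:
  fixes r h :: "'g \<Rightarrow> 'a::comm_ring_1"
  shows "finite T \<Longrightarrow> S \<subseteq> T \<Longrightarrow> {m. r m \<noteq> 0} \<subseteq> S \<Longrightarrow>
   (\<Sum>m\<in>S. r m * h m) = (\<Sum>m\<in>T. r m * h m)"
  apply (rule sum.mono_neutral_left)
    apply simp
   apply simp
  by (metis (mono_tags, lifting) DiffE mem_Collect_eq mult_zero_left subsetD)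

lemma ext_rel_kill:
  fixes \<omega> :: "'g::ab_group_add list \<Rightarrow> 'a::comm_ring_1"
  assumes alt: "alt_ml sm \<omega>"
  shows "r \<in> ext_rel sm \<Longrightarrow> formal r \<and>
    (\<forall>S. finite S \<longrightarrow> {m. r m \<noteq> 0} \<subseteq> S \<longrightarrow> (\<Sum>m\<in>S. r m * \<omega> (m @ l)) = 0)"
proof (induction rule: ext_rel.induct)
  case rel_zero
  then show ?case by (simp add: formal_def)
next
  case (rel_add1 u x y v)
  let ?r = "\<lambda>l. word (u @ [x + y] @ v) l - word (u @ [x] @ v) l - (word (u @ [y] @ v) l :: 'a)"
  let ?W = "{u @ [x + y] @ v, u @ [x] @ v, u @ [y] @ v}"
  have sup: "{m. ?r m \<noteq> 0} \<subseteq> ?W" by (rule subsetI, rule ccontr) (simp add: word_def)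
  have "formal ?r" unfolding formal_def by (rule finite_subset[OF sup]) simp
  moreover have "(\<Sum>m\<in>S. ?r m * \<omega> (m @ l)) = 0" if S: "finite S" "{m. ?r m \<noteq> 0} \<subseteq> S" for S
  proof -
    let ?T = "S \<union> ?W"
    have fT: "finite ?T" using S by simp
    have "(\<Sum>m\<in>S. ?r m * \<omega> (m @ l)) = (\<Sum>m\<in>?T. ?r m * \<omega> (m @ l))"
      by (rule sum_extend) (use S in auto)
    also have "\<dots> = (\<Sum>m\<in>?T. word (u @ [x + y] @ v) m * \<omega> (m @ l)) - (\<Sum>m\<in>?T. word (u @ [x] @ v) m * \<omega> (m @ l))
        - (\<Sum>m\<in>?T. word (u @ [y] @ v) m * \<omega> (m @ l))"
      by (simp add: left_diff_distrib sum_subtractf)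
    also have "\<dots> = \<omega> ((u @ [x + y] @ v) @ l) - \<omega> ((u @ [x] @ v) @ l) - \<omega> ((u @ [y] @ v) @ l)"
      using fT by (simp only: sum_word Un_iff insert_iff simp_thms)
    also have "\<dots> = 0"
    proof -
      have "\<omega> (u @ [x + y] @ (v @ l)) = \<omega> (u @ [x] @ (v @ l)) + \<omega> (u @ [y] @ (v @ l))"
        using alt unfolding alt_ml_def by blast
      then show ?thesis by simp
    qed
    finally show ?thesis .
  qed
  ultimately show ?case by blast
next
  case (rel_smult1 u a x v)
  let ?r = "\<lambda>l. word (u @ [sm a x] @ v) l - a * (word (u @ [x] @ v) l :: 'a)"
  let ?W = "{u @ [sm a x] @ v, u @ [x] @ v}"
  have sup: "{m. ?r m \<noteq> 0} \<subseteq> ?W" by (rule subsetI, rule ccontr) (simp add: word_def)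
  have "formal ?r" unfolding formal_def by (rule finite_subset[OF sup]) simp
  moreover have "(\<Sum>m\<in>S. ?r m * \<omega> (m @ l)) = 0" if S: "finite S" "{m. ?r m \<noteq> 0} \<subseteq> S" for S
  proof -
    let ?T = "S \<union> ?W"
    have fT: "finite ?T" using S by simp
    have "(\<Sum>m\<in>S. ?r m * \<omega> (m @ l)) = (\<Sum>m\<in>?T. ?r m * \<omega> (m @ l))"
      by (rule sum_extend) (use S in auto)
    also have "\<dots> = (\<Sum>m\<in>?T. word (u @ [sm a x] @ v) m * \<omega> (m @ l)) - a * (\<Sum>m\<in>?T. word (u @ [x] @ v) m * \<omega> (m @ l))"
      by (simp add: left_diff_distrib sum_subtractf sum_distrib_left mult.assoc)
    also have "\<dots> = \<omega> ((u @ [sm a x] @ v) @ l) - a * \<omega> ((u @ [x] @ v) @ l)"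
      using fT by (simp only: sum_word Un_iff insert_iff simp_thms)
    also have "\<dots> = 0"
    proof -
      have "\<omega> (u @ [sm a x] @ (v @ l)) = a * \<omega> (u @ [x] @ (v @ l))"
        using alt unfolding alt_ml_def by blast
      then show ?thesis by simp
    qed
    finally show ?thesis .
  qed
  ultimately show ?case by blast
next
  case (rel_alt u x v)
  let ?W = "{u @ [x, x] @ v}"
  have sup: "{m. word (u @ [x, x] @ v) m \<noteq> (0::'a)} \<subseteq> ?W" by (rule subsetI, rule ccontr) (simp add: word_def)
  have "formal (word (u @ [x, x] @ v) :: 'g list \<Rightarrow> 'a)" unfolding formal_def by (rule finite_subset[OF sup]) simp
  moreover have "(\<Sum>m\<in>S. word (u @ [x, x] @ v) m * \<omega> (m @ l)) = 0"
    if S: "finite S" "{m. word (u @ [x, x] @ v) m \<noteq> (0::'a)} \<subseteq> S" for S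
  proof -
    let ?T = "S \<union> ?W"
    have fT: "finite ?T" using S by simp
    have "(\<Sum>m\<in>S. word (u @ [x, x] @ v) m * \<omega> (m @ l)) = (\<Sum>m\<in>?T. word (u @ [x, x] @ v) m * \<omega> (m @ l))"
      by (rule sum_extend) (use S in auto)
    also have "\<dots> = \<omega> ((u @ [x, x] @ v) @ l)"
      using fT by (simp only: sum_word Un_iff insert_iff simp_thms)
    also have "\<dots> = 0"
    proof -
      have "\<omega> (u @ [x, x] @ (v @ l)) = 0"
        using alt unfolding alt_ml_def by blast
      then show ?thesis by simp
    qed
    finally show ?thesis .
  qed
  ultimately show ?case by blast
next
  case (rel_plus c c')
  have sup: "{m. c m + c' m \<noteq> 0} \<subseteq> {m. c m \<noteq> 0} \<union> {m. c' m \<noteq> 0}" by auto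
  have fc: "finite {m. c m \<noteq> 0}" "finite {m. c' m \<noteq> 0}" using rel_plus.IH by (auto simp: formal_def)
  have "formal (\<lambda>l. c l + c' l)" unfolding formal_def by (rule finite_subset[OF sup]) (use fc in simp)
  moreover have "(\<Sum>m\<in>S. (c m + c' m) * \<omega> (m @ l)) = 0"
    if S: "finite S" "{m. c m + c' m \<noteq> 0} \<subseteq> S" for S
  proof -
    let ?T = "S \<union> {m. c m \<noteq> 0} \<union> {m. c' m \<noteq> 0}"
    have fT: "finite ?T" using S fc by simp
    have "(\<Sum>m\<in>S. (c m + c' m) * \<omega> (m @ l)) = (\<Sum>m\<in>?T. (c m + c' m) * \<omega> (m @ l))"
      by (rule sum_extend[where r="\<lambda>m. c m + c' m"]) (use S fT in auto)
    also have "\<dots> = (\<Sum>m\<in>?T. c m * \<omega> (m @ l)) + (\<Sum>m\<in>?T. c' m * \<omega> (m @ l))"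
      by (simp add: distrib_right sum.distrib)
    also have "\<dots> = 0"
    proof -
      have h1: "(\<Sum>m\<in>?T. c m * \<omega> (m @ l)) = 0"
        by (rule conjunct2[OF rel_plus.IH(1), rule_format]) (use fT in auto)
      have h2: "(\<Sum>m\<in>?T. c' m * \<omega> (m @ l)) = 0"
        by (rule conjunct2[OF rel_plus.IH(2), rule_format]) (use fT in auto)
      show ?thesis using h1 h2 by simp
    qed
    finally show ?thesis .
  qed
  ultimately show ?case by simp
next
  case (rel_scale c a)
  have sup: "{m. a * c m \<noteq> 0} \<subseteq> {m. c m \<noteq> 0}" by auto
  have fc: "finite {m. c m \<noteq> 0}" using rel_scale.IH by (auto simp: formal_def)
  have "formal (\<lambda>l. a * c l)" unfolding formal_def by (rule finite_subset[OF sup]) (use fc in simp)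
  moreover have "(\<Sum>m\<in>S. (a * c m) * \<omega> (m @ l)) = 0"
    if S: "finite S" "{m. a * c m \<noteq> 0} \<subseteq> S" for S
  proof -
    let ?T = "S \<union> {m. c m \<noteq> 0}"
    have fT: "finite ?T" using S fc by simp
    have "(\<Sum>m\<in>S. (a * c m) * \<omega> (m @ l)) = (\<Sum>m\<in>?T. (a * c m) * \<omega> (m @ l))"
      by (rule sum_extend[where r="\<lambda>m. a * c m"]) (use S fT in auto)
    also have "\<dots> = a * (\<Sum>m\<in>?T. c m * \<omega> (m @ l))"
      by (simp add: sum_distrib_left mult.assoc)
    also have "\<dots> = 0"
    proof -
      have h1: "(\<Sum>m\<in>?T. c m * \<omega> (m @ l)) = 0"
        by (rule conjunct2[OF rel_scale.IH, rule_format]) (use fT in auto)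
      show ?thesis using h1 by simp
    qed
    finally show ?thesis .
  qed
  ultimately show ?case by simp
qed


lemma contr_eq:
  fixes x \<omega> :: "'g list \<Rightarrow> 'a::comm_ring_1"
  assumes "formal x" "finite S" "{m. x m \<noteq> 0} \<subseteq> S"
  shows "contr x \<omega> l = (\<Sum>m\<in>S. x m * \<omega> (m @ l))"
  unfolding contr_def by (rule sum_extend) (use assms in \<open>auto simp: formal_def\<close>)

lemma contr_support:
  fixes x \<omega> :: "'g::ab_group_add list \<Rightarrow> 'a::comm_ring_1"
  assumes alt: "alt_ml sm \<omega>" and fx: "formal x" and th: "tensor_homogeneous sm p x"
    and ch: "cotensor_homogeneous q \<omega>" and nz: "contr x \<omega> l \<noteq> 0"
  shows "int (length l) = - q - p"
proof -
  obtain c' where c': "formal c'" "(\<lambda>l. x l - c' l) \<in> ext_rel sm"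
    "\<And>l. c' l \<noteq> 0 \<Longrightarrow> int (length l) = p"
    using th unfolding tensor_homogeneous_def by blast
  let ?S = "{m. x m \<noteq> 0} \<union> {m. c' m \<noteq> 0}"
  have fS: "finite ?S" using fx c'(1) by (simp add: formal_def)
  have K: "\<forall>S. finite S \<longrightarrow> {m. x m - c' m \<noteq> 0} \<subseteq> S \<longrightarrow> (\<Sum>m\<in>S. (x m - c' m) * \<omega> (m @ l)) = 0"
    using ext_rel_kill[OF alt c'(2), of l] by simp
  have sub: "{m. x m - c' m \<noteq> 0} \<subseteq> ?S" by auto
  have "(\<Sum>m\<in>?S. (x m - c' m) * \<omega> (m @ l)) = 0"
    using K fS sub by blast
  then have "(\<Sum>m\<in>?S. x m * \<omega> (m @ l)) = (\<Sum>m\<in>?S. c' m * \<omega> (m @ l))"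
    by (simp add: left_diff_distrib sum_subtractf)
  moreover have "contr x \<omega> l = (\<Sum>m\<in>?S. x m * \<omega> (m @ l))"
    by (rule contr_eq[OF fx fS]) blast
  ultimately have "(\<Sum>m\<in>?S. c' m * \<omega> (m @ l)) \<noteq> 0" using nz by simp
  then obtain m where "c' m * \<omega> (m @ l) \<noteq> 0"
    by (meson sum.not_neutral_contains_not_neutral)
  then have "c' m \<noteq> 0" "\<omega> (m @ l) \<noteq> 0" by auto
  then have "int (length m) = p" "int (length (m @ l)) = - q"
    using c'(3) ch unfolding cotensor_homogeneous_def by auto
  then show ?thesis by simp
qed

lemma deriv0: "is_derivation \<delta> \<Longrightarrow> \<delta> 0 = 0"
  unfolding is_derivation_def by (metis add_cancel_right_right add_0)

lemma dR_zero:
  assumes "\<forall>x. is_derivation (D x)"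
  shows "dR br D (\<lambda>_. 0) = (\<lambda>_. 0)"
proof -
  have D0: "\<And>z. D z 0 = 0" using assms deriv0 by blast
  show ?thesis unfolding dR_def by (simp add: D0)
qed

lemma dR_support:
  assumes der: "\<forall>x. is_derivation (D x)" and ch: "cotensor_homogeneous q f"
    and nz: "dR br D f l \<noteq> 0"
  shows "int (length l) = 1 - q"
proof (rule ccontr)
  assume ne: "int (length l) \<noteq> 1 - q"
  have f0: "f w = 0" if "length w = length l - 1" "length l \<ge> 1" for w
  proof (rule ccontr)
    assume "f w \<noteq> 0"
    then have "int (length w) = - q" using ch unfolding cotensor_homogeneous_def by blast
    then show False using that ne by simp
  qed
  have s1: "(\<Sum>j<length l. (-1) ^ j * D (l ! j) (f (del_nth j l))) = 0"
  proof (rule sum.neutral, rule ballI)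
    fix j assume "j \<in> {..<length l}"
    then have "f (del_nth j l) = 0" by (intro f0) (auto simp: del_nth_def)
    moreover have "D (l ! j) 0 = 0" using der deriv0 by blast
    ultimately show "(-1) ^ j * D (l ! j) (f (del_nth j l)) = 0" by simp
  qed
  have s2: "(\<Sum>j<length l. \<Sum>i<j. (-1) ^ (i + j) * f (br (l ! i) (l ! j) # del_nth i (del_nth j l))) = 0"
  proof (rule sum.neutral, rule ballI, rule sum.neutral, rule ballI)
    fix j i assume "j \<in> {..<length l}" "i \<in> {..<j}"
    then have "f (br (l ! i) (l ! j) # del_nth i (del_nth j l)) = 0" by (intro f0) (auto simp: del_nth_def)
    then show "(-1) ^ (i + j) * f (br (l ! i) (l ! j) # del_nth i (del_nth j l)) = 0" by simp
  qed
  have "dR br D f l = 0" unfolding dR_def using s1 s2 by simp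
  then show False using nz by simp
qed

theorem mainTheorem3:
  fixes sm :: "'a::{comm_ring_1,real_algebra_1} \<Rightarrow> 'g::ab_group_add \<Rightarrow> 'g"
    and br :: "'g \<Rightarrow> 'g \<Rightarrow> 'g" and D :: "'g \<Rightarrow> 'a \<Rightarrow> 'a"
    and \<omega> f x y :: "'g list \<Rightarrow> 'a" and n :: nat and df dx dy :: int
  assumes "n_plectic n sm br D \<omega>"
    and "f \<in> Pois sm br D \<omega>" and "cotensor_homogeneous df f"
    and "poisson_constraint \<omega> f y" and "hamilton_tensor br D \<omega> f x"
    and "tensor_homogeneous sm dx x" and "tensor_homogeneous sm dy y"
    and "dR br D f \<noteq> (\<lambda>_. 0)"
  shows "dx = df + int n \<and> dy = dx + 1 \<and> dR br D (contr y \<omega>) = contr x \<omega>"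
proof -
  have der: "\<forall>x. is_derivation (D x)" and wc: "\<omega> \<in> cotensors sm"
    and wh: "cotensor_homogeneous (- int (n + 1)) \<omega>"
    using assms(1) unfolding n_plectic_def is_lie_rinehart_def by auto
  have alt: "alt_ml sm \<omega>" by (rule cotensors_alt_ml[OF wc])
  have fy: "formal y" "contr y \<omega> = f" using assms(4) unfolding poisson_constraint_def is_tensor_def by auto
  have fx: "formal x" "contr x \<omega> = dR br D f" using assms(5) unfolding hamilton_tensor_def is_tensor_def by auto
  obtain l where l: "dR br D f l \<noteq> 0" using assms(8) by blast
  have e1: "int (length l) = 1 - df" by (rule dR_support[OF der assms(3) l])
  have e2: "int (length l) = - (- int (n + 1)) - dx"
    by (rule contr_support[OF alt fx(1) assms(6) wh]) (use l fx(2) in simp)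
  have "f \<noteq> (\<lambda>_. 0)" using assms(8) dR_zero[OF der, of br] by auto
  then obtain l' where l': "f l' \<noteq> 0" by blast
  have e3: "int (length l') = - df" using assms(3) l' unfolding cotensor_homogeneous_def by blast
  have e4: "int (length l') = - (- int (n + 1)) - dy"
    by (rule contr_support[OF alt fy(1) assms(7) wh]) (use l' fy(2) in simp)
  show ?thesis using e1 e2 e3 e4 fx(2) fy(2) by simp
qed

end
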